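(* Suppose $\bm X \in \mathscr{E}_4^N$ and $\bm Y$ is a degree 4 pseudomoment matrix extending $\bm X$. Then $\bm Y \succeq \mathrm{vec}(\bm X)\mathrm{vec}(\bm X)^\top$, and every eigenvector of $\bm Y - \mathrm{vec}(\bm X)\mathrm{vec}(\bm X)^\top$ with nonzero eigenvalue lies in the subspace $\mathrm{vec}(\mathsf{pert}_{\mathscr{E}_2^N}(\bm X)) \subset \mathbb{R}^{N^2}$. Consequently, $$\mathrm{rank}(\bm Y) \le \dim \mathsf{pert}_{\mathscr{E}_2^N}(\bm X) + 1 = \frac{\mathrm{rank}(\bm X)(\mathrm{rank}(\bm X)+1)}{2} - \mathrm{rank}(\bm X^{\odot 2}) + 1 \le \frac{\mathrm{rank}(\bm X)(\mathrm{rank}(\bm X)+1)}{2}.$$ In particular, if $\bm X$ is an extreme point of $\mathscr{E}_2^N$ and is extended by some degree 4 pseudomoment matrix $\bm Y$, then $\mathrm{rank}(\bm Y) = \mathrm{rank}(\bm X) = 1$, and $\bm X = \bm x\bm x^\top$, $\bm Y = (\bm x\otimes\bm x)(\bm x\otimes \bm x)^\top$ for some $\bm x \in \{\pm1\}^N$.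
   Context: $\mathscr{E}_2^N := \{\bm X \in \mathbb{R}^{N\times N}_{\mathrm{sym}} : \bm X\succeq 0,\ X_{ii} = 1 \ \forall i\}$ (the elliptope). For a closed convex set $K$ in a real vector space $E$ and $\bm X \in K$, $\mathsf{pert}_K(\bm X) := \{\bm A \in E : \bm X \pm t\bm A \in K \text{ for all sufficiently small } t>0\}$; here $E = \mathbb{R}^{N\times N}_{\mathrm{sym}}$. For $\bm A \in \mathbb{R}^{N\times N}$, $\mathrm{vec}(\bm A)\in\mathbb{R}^{N^2}$ has entries $\mathrm{vec}(\bm A)_{(ij)} = A_{ij}$, indices $(ij)$ ordered lexicographically. $\bm X^{\odot 2}$ is the entrywise square of $\bm X$. A degree 4 pseudomoment matrix is a matrix $\bm Y \in \mathbb{R}^{N^2\times N^2}$, rows and columns indexed by pairs $(ij)\in[N]^2$ (lexicographically ordered), such that: (1) $\bm Y\succeq 0$; (2) $Y_{(ij)(kk)}$ does not depend on $k$; (3) $Y_{(ii)(ii)} = 1$ for all $i$; (4) $Y_{(ij)(k\ell)}$ is invariant under all permutations of the four indices $i,j,k,\ell$. Such $\bm Y$ extends $\bm X\in\mathbb{R}^{N\times N}_{\mathrm{sym}}$ if $Y_{(1i)(1j)} = X_{ij}$ for all $i,j$. $\mathscr{E}_4^N$ is the set of symmetric $\bm X \in \mathbb{R}^{N\times N}$ that are extended by some degree 4 pseudomoment matrix. *)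

theory Defs
  imports "HOL-Analysis.Analysis"
begin

definition symm :: "real^'m^'m \<Rightarrow> bool" where
  "symm A \<longleftrightarrow> transpose A = A"

definition psd :: "real^'m^'m \<Rightarrow> bool" where
  "psd A \<longleftrightarrow> symm A \<and> (\<forall>x. 0 \<le> x \<bullet> (A *v x))"

definition outer :: "real^'m \<Rightarrow> real^'m \<Rightarrow> real^'m^'m" where
  "outer u v = (\<chi> a b. u $ a * v $ b)"

definition vecM :: "real^'n^'n \<Rightarrow> real^('n \<times> 'n)" where
  "vecM A = (\<chi> p. A $ fst p $ snd p)"

definition kron :: "real^'n \<Rightarrow> real^('n \<times> 'n)" where
  "kron x = (\<chi> p. x $ fst p * x $ snd p)"

definition hsq :: "real^'n^'n \<Rightarrow> real^'n^'n" where
  "hsq X = (\<chi> i j. (X $ i $ j)^2)"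

definition elliptope2 :: "(real^'n^'n) set" where
  "elliptope2 = {X. psd X \<and> (\<forall>i. X $ i $ i = 1)}"

definition pert :: "(real^'n^'n) set \<Rightarrow> real^'n^'n \<Rightarrow> (real^'n^'n) set" where
  "pert K X = {A. symm A \<and> (\<exists>e>0. \<forall>t. 0 < t \<and> t < e \<longrightarrow> X + t *\<^sub>R A \<in> K \<and> X - t *\<^sub>R A \<in> K)}"

definition pseudomoment4 :: "real^('n::finite \<times> 'n)^('n \<times> 'n) \<Rightarrow> bool" where
  "pseudomoment4 Y \<longleftrightarrow>
     psd Y \<and>
     (\<forall>i j k l. Y $ (i,j) $ (k,k) = Y $ (i,j) $ (l,l)) \<and>
     (\<forall>i. Y $ (i,i) $ (i,i) = 1) \<and>
     (\<forall>i j k l \<sigma>. \<sigma> permutes {0..<4::nat} \<longrightarrow>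
        (let w = (\<lambda>m. [i,j,k,l] ! \<sigma> m) in Y $ (w 0, w 1) $ (w 2, w 3)) = Y $ (i,j) $ (k,l))"

text \<open>Index 1 of [N] is the least element of the index type.\<close>
definition extends4 :: "((real, 'n::{finite,wellorder} \<times> 'n) vec, 'n \<times> 'n) vec \<Rightarrow> ((real, 'n) vec, 'n) vec \<Rightarrow> bool" where
  "extends4 Y X \<longleftrightarrow> (\<forall>i j. Y $ (LEAST k. True, i) $ (LEAST k. True, j) = X $ i $ j)"

definition elliptope4 :: "((real, 'n::{finite,wellorder}) vec, 'n) vec set" where
  "elliptope4 = {X. symm X \<and> (\<exists>Y. pseudomoment4 Y \<and> extends4 Y X)}"

end

theory Submission
  imports Defs
begin


lemma symm_inner:
  fixes A :: "real^'m^'m"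
  assumes "symm A" shows "x \<bullet> (A *v y) = y \<bullet> (A *v x)"
  by (metis assms dot_lmul_matrix inner_commute symm_def transpose_matrix_vector)

lemma mv_scale: "(A::real^'m^'k) *v (c *\<^sub>R x) = c *\<^sub>R (A *v x)"
  by (simp add: matrix_vector_mult_def vec_eq_iff sum_distrib_left algebra_simps)

lemma quad_expand:
  fixes A :: "real^'m^'m"
  assumes "symm A"
  shows "(x + t *\<^sub>R y) \<bullet> (A *v (x + t *\<^sub>R y)) =
     x \<bullet> (A *v x) + 2 * t * (y \<bullet> (A *v x)) + t^2 * (y \<bullet> (A *v y))"
proof -
  have "x \<bullet> (A *v y) = y \<bullet> (A *v x)" using symm_inner[OF assms] .
  then show ?thesis
    by (simp add: matrix_vector_right_distrib mv_scale inner_add_left inner_add_right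
        power2_eq_square algebra_simps)
qed

lemma lin_quad_nonneg:
  fixes a b :: real
  assumes "\<And>t. 0 \<le> a * t + b * t^2" shows "a = 0"
proof (rule ccontr)
  assume "a \<noteq> 0"
  define c where "c = \<bar>b\<bar> + 1"
  have c: "c > 0" "b \<le> c" unfolding c_def by auto
  define t where "t = - a / (2 * c)"
  have "b * t^2 \<le> c * t^2" using c by (simp add: mult_right_mono)
  moreover have "a * t + c * t^2 = - (a^2) / (4 * c)"
    using c unfolding t_def by (simp add: field_simps power2_eq_square)
  moreover have "- (a^2) / (4 * c) < 0"
    using c \<open>a \<noteq> 0\<close> by (simp add: divide_pos_pos)
  ultimately show False using assms[of t] by linarith
qed

lemma psd_zero:
  fixes A :: "real^'m^'m"
  assumes "psd A" "x \<bullet> (A *v x) = 0" shows "A *v x = 0"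
proof -
  have s: "symm A" using assms(1) psd_def by blast
  let ?y = "A *v x"
  have "\<And>t. 0 \<le> (2 * (?y \<bullet> ?y)) * t + (?y \<bullet> (A *v ?y)) * t^2"
  proof -
    fix t
    have "0 \<le> (x + t *\<^sub>R ?y) \<bullet> (A *v (x + t *\<^sub>R ?y))" using assms(1) psd_def by blast
    then show "0 \<le> (2 * (?y \<bullet> ?y)) * t + (?y \<bullet> (A *v ?y)) * t^2"
      unfolding quad_expand[OF s] using assms(2) by (simp add: algebra_simps)
  qed
  from lin_quad_nonneg[OF this] show ?thesis by simp
qed

lemma psd_cs1:
  fixes A :: "real^'m^'m"
  assumes "psd A" "e \<bullet> (A *v e) = 1"
  shows "(e \<bullet> (A *v z))^2 \<le> z \<bullet> (A *v z)"
proof -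
  have s: "symm A" using assms(1) psd_def by blast
  define s0 where "s0 = - (e \<bullet> (A *v z))"
  have "0 \<le> (z + s0 *\<^sub>R e) \<bullet> (A *v (z + s0 *\<^sub>R e))" using assms(1) psd_def by blast
  also have "\<dots> = z \<bullet> (A *v z) - (e \<bullet> (A *v z))^2"
    unfolding quad_expand[OF s] s0_def assms(2) by (simp add: power2_eq_square)
  finally show ?thesis by simp
qed

lemma outer_mv: "outer u v *v z = (v \<bullet> z) *\<^sub>R u"
  by (simp add: outer_def matrix_vector_mult_def vec_eq_iff inner_vec_def sum_distrib_left algebra_simps)

lemma symm_outer_self: "symm (outer v v)"
  by (simp add: symm_def outer_def transpose_def vec_eq_iff)

lemma schur_psd:
  fixes A :: "real^'m^'m"
  assumes "psd A" "e \<bullet> (A *v e) = 1"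
  shows "psd (A - outer (A *v e) (A *v e))"
proof -
  have s: "symm A" using assms(1) psd_def by blast
  have "symm (A - outer (A *v e) (A *v e))"
    using s symm_outer_self by (simp add: symm_def transpose_def vec_eq_iff)
  moreover have "0 \<le> x \<bullet> ((A - outer (A *v e) (A *v e)) *v x)" for x
  proof -
    have "(A *v e) \<bullet> x = e \<bullet> (A *v x)" using symm_inner[OF s, of e x] by (simp add: inner_commute)
    then show ?thesis using psd_cs1[OF assms, of x]
      by (simp add: matrix_vector_mult_diff_rdistrib outer_mv inner_diff_right power2_eq_square inner_commute[of x "A *v e"])
  qed
  ultimately show ?thesis by (simp add: psd_def)
qed


lemma rank_nullity_sub:
  fixes f :: "'a::euclidean_space \<Rightarrow> 'b::euclidean_space"
  assumes lf: "linear f" and S: "subspace S"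
  shows "dim (f ` S) + dim {x\<in>S. f x = 0} = dim S"
proof -
  let ?N = "{x\<in>S. f x = 0}"
  let ?C = "{y\<in>S. \<forall>x\<in>?N. orthogonal x y}"
  have subN: "subspace ?N"
    using S lf unfolding subspace_def by (auto simp: linear_add linear_scale linear_0)
  have subC: "subspace ?C"
    using S unfolding subspace_def orthogonal_def by (auto simp: inner_add_right)
  have d1: "dim ?C + dim ?N = dim S"
    by (rule dim_subspace_orthogonal_to_vectors[OF subN S]) auto
  have img: "f ` S = f ` ?C"
  proof
    show "f ` ?C \<subseteq> f ` S" by auto
    show "f ` S \<subseteq> f ` ?C"
    proof
      fix u assume "u \<in> f ` S"
      then obtain x where x: "x \<in> S" "u = f x" by auto
      obtain y z where yz: "y \<in> span ?N" "\<And>v. v \<in> span ?N \<Longrightarrow> orthogonal z v" "x = y + z"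
        using orthogonal_subspace_decomp_exists[of ?N x] by metis
      have spN: "span ?N = ?N" using span_eq_iff[THEN iffD2, OF subN] .
      have yN: "y \<in> ?N" using yz(1) spN by simp
      have zeq: "z = x - y" using yz(3) by simp
      have zS: "z \<in> S" unfolding zeq using subspace_diff[OF S x(1)] yN by simp
      have "\<forall>v\<in>?N. orthogonal v z"
      proof
        fix v assume "v \<in> ?N"
        then have "orthogonal z v" using yz(2) spN by simp
        then show "orthogonal v z" by (simp add: orthogonal_commute)
      qed
      then have zC: "z \<in> ?C" using zS by simp
      have "f x = f z" using yz(3) yN lf by (simp add: linear_add)
      then show "u \<in> f ` ?C" using zC x(2) by blast
    qed
  qed
  have inj: "inj_on f (span ?C)"
  proof -
    have spC: "span ?C = ?C" using span_eq_iff[THEN iffD2, OF subC] .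
    have injC: "inj_on f ?C"
    proof (rule inj_onI)
      fix a b assume ab: "a \<in> ?C" "b \<in> ?C" "f a = f b"
      have "a - b \<in> ?C" using subspace_diff[OF subC ab(1) ab(2)] .
      moreover have "a - b \<in> ?N" using ab S lf by (simp add: linear_diff subspace_diff)
      ultimately have "orthogonal (a - b) (a - b)" by blast
      then show "a = b" by (simp add: orthogonal_def)
    qed
    show ?thesis unfolding spC by (rule injC)
  qed
  have "dim (f ` ?C) = dim ?C" using dim_image_eq[OF lf inj] .
  then show ?thesis using d1 img by simp
qed

lemma rank_nullity_mat:
  fixes A :: "real^'n^'m"
  shows "rank A + dim {x. A *v x = 0} = CARD('n)"
proof -
  have "dim ((\<lambda>x. A *v x) ` UNIV) + dim {x\<in>UNIV. A *v x = 0} = dim (UNIV :: (real^'n) set)"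
    by (rule rank_nullity_sub) (auto simp: matrix_vector_mul_linear)
  then show ?thesis by (simp add: rank_dim_range)
qed

lemma inner_transpose: "(x::real^'m) \<bullet> ((A::real^'n^'m) *v y) = (transpose A *v x) \<bullet> y"
  by (metis dot_lmul_matrix transpose_matrix_vector)

lemma rank_AAT:
  fixes A :: "real^'n^'m"
  shows "rank (A ** transpose A) = rank A"
proof -
  have kk: "(A ** transpose A) *v x = 0 \<longleftrightarrow> transpose A *v x = 0" for x
  proof
    assume "(A ** transpose A) *v x = 0"
    then have "x \<bullet> (A *v (transpose A *v x)) = 0" by (metis matrix_vector_mul_assoc inner_zero_right)
    then have "(transpose A *v x) \<bullet> (transpose A *v x) = 0" using inner_transpose by metis
    then show "transpose A *v x = 0" by simp
  next
    assume "transpose A *v x = 0"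
    then show "(A ** transpose A) *v x = 0" by (metis matrix_vector_mul_assoc matrix_vector_mult_0_right)
  qed
  have k: "{x. (A ** transpose A) *v x = 0} = {x. transpose A *v x = 0}" using kk by auto
  have "rank (A ** transpose A) + dim {x. (A ** transpose A) *v x = 0} = CARD('m)"
    by (rule rank_nullity_mat)
  moreover have "rank (transpose A) + dim {x. transpose A *v x = 0} = CARD('m)"
    by (rule rank_nullity_mat)
  ultimately show ?thesis using k rank_transpose by (metis add_right_cancel)
qed

lemma sum_mv: "(\<Sum>i\<in>S. (A i :: real^'n^'m)) *v z = (\<Sum>i\<in>S. A i *v z)"
  by (induction S rule: infinite_finite_induct) (auto simp: matrix_vector_mult_add_rdistrib)

lemma axis_inner_mv: "axis j 1 \<bullet> ((A::real^'m^'m) *v axis i 1) = A $ j $ i"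
  by (metis cart_eq_inner_axis column_def inner_commute matrix_vector_mult_basis vec_lambda_beta)

lemma psd_diag_nonneg: "psd A \<Longrightarrow> 0 \<le> A $ i $ i"
  using axis_inner_mv[of i A i] psd_def by metis

lemma psd_diag_zero: "psd (A::real^'m^'m) \<Longrightarrow> A $ i $ i = 0 \<Longrightarrow> A *v axis i 1 = 0"
  using axis_inner_mv[of i A i] psd_zero by metis


lemma psd_symm: "psd A \<Longrightarrow> symm A" by (simp add: psd_def)

lemma mv_column: "((A::real^'m^'k) *v axis i 1) $ a = A $ a $ i"
  by (simp add: matrix_vector_mult_basis column_def)

lemma subspace_ker: "subspace {x. (A::real^'m^'k) *v x = 0}"
  by (auto simp: subspace_def matrix_vector_right_distrib mv_scale)

lemma psd_factor_aux:
  fixes X :: "real^'m^'m"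
  shows "psd X \<Longrightarrow> \<exists>S w. X = (\<Sum>i\<in>S. outer (w i) (w i)) \<and> card S \<le> rank X \<and> (\<forall>j\<in>S. X$j$j \<noteq> 0)"
proof (induction "rank X" arbitrary: X rule: less_induct)
  case (less X)
  show ?case
  proof (cases "X = 0")
    case True then show ?thesis by (intro exI[of _ "{}"]) auto
  next
    case False
    have "\<exists>i. X$i$i \<noteq> 0"
    proof (rule ccontr)
      assume "\<not> (\<exists>i. X$i$i \<noteq> 0)"
      then have "\<forall>i. X *v axis i 1 = 0" using psd_diag_zero less.prems by auto
      then have "X$a$i = 0" for a i by (metis mv_column zero_index)
      then have "X = 0" by (simp add: vec_eq_iff)
      then show False using False by simp
    qed
    then obtain i where "X$i$i \<noteq> 0" by blast
    define d where "d = X$i$i"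
    have d: "d > 0" using psd_diag_nonneg[OF less.prems, of i] \<open>X$i$i \<noteq> 0\<close> d_def by linarith
    define e where "e = (1 / sqrt d) *\<^sub>R (axis i 1 :: real^'m)"
    have sX: "symm X" using less.prems psd_symm by blast
    have e1: "e \<bullet> (X *v e) = 1"
    proof -
      have "e \<bullet> (X *v e) = (1 / sqrt d) * (1 / sqrt d) * (axis i 1 \<bullet> (X *v axis i 1))"
        unfolding e_def by (simp add: mv_scale)
      also have "\<dots> = 1" using d by (simp add: axis_inner_mv d_def[symmetric])
      finally show ?thesis .
    qed
    define X' where "X' = X - outer (X *v e) (X *v e)"
    have psdX': "psd X'" unfolding X'_def by (rule schur_psd[OF less.prems e1])
    have X'mv: "X' *v z = X *v z - (e \<bullet> (X *v z)) *\<^sub>R (X *v e)" for z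
    proof -
      have "(X *v e) \<bullet> z = e \<bullet> (X *v z)" using symm_inner[OF sX, of z e] by (simp add: inner_commute)
      then show ?thesis unfolding X'_def by (simp add: matrix_vector_mult_diff_rdistrib outer_mv)
    qed
    have kersub: "{x. X *v x = 0} \<subseteq> {x. X' *v x = 0}" using X'mv by auto
    have X'e: "X' *v e = 0" using X'mv[of e] e1 by simp
    have ax: "axis i 1 = sqrt d *\<^sub>R e" unfolding e_def using d by simp
    have X'ax: "X' *v axis i 1 = 0" unfolding ax mv_scale X'e by simp
    have Xax: "X *v axis i 1 \<noteq> 0"
    proof
      assume "X *v axis i 1 = 0"
      then have "(X *v axis i 1) $ i = 0" by simp
      then show False using \<open>X$i$i \<noteq> 0\<close> by (simp add: mv_column)
    qed
    have "dim (insert (axis i 1) {x. X *v x = 0}) = dim {x. X *v x = 0} + 1"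
    proof -
      have spK: "span {x. X *v x = 0} = {x. X *v x = 0}"
        using span_eq_iff[THEN iffD2, OF subspace_ker[of X]] .
      have "axis i 1 \<notin> span {x. X *v x = 0}" unfolding spK using Xax by simp
      then show ?thesis by (simp add: dim_insert)
    qed
    moreover have "dim (insert (axis i 1) {x. X *v x = 0}) \<le> dim {x. X' *v x = 0}"
      by (rule dim_subset) (use kersub X'ax in auto)
    ultimately have "dim {x. X *v x = 0} + 1 \<le> dim {x. X' *v x = 0}" by simp
    then have rk: "rank X' < rank X" using rank_nullity_mat[of X] rank_nullity_mat[of X'] by linarith
    obtain S' w' where S': "X' = (\<Sum>i\<in>S'. outer (w' i) (w' i))" "card S' \<le> rank X'"
        "\<forall>j\<in>S'. X'$j$j \<noteq> 0"
      using less.hyps[OF rk psdX'] by blast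
    have X'ii: "X'$i$i = 0" using X'ax by (metis mv_column zero_index)
    have iS: "i \<notin> S'" using S'(3) X'ii by blast
    have diagS: "\<forall>j\<in>S'. X$j$j \<noteq> 0"
    proof (intro ballI notI)
      fix j assume j: "j \<in> S'" "X$j$j = 0"
      then have "X *v axis j 1 = 0" using psd_diag_zero less.prems by blast
      then have "X' *v axis j 1 = 0" using kersub by blast
      then have "X'$j$j = 0" by (metis mv_column zero_index)
      then show False using S'(3) j by blast
    qed
    define w where "w = w'(i := X *v e)"
    have "X = X' + outer (X *v e) (X *v e)" unfolding X'_def by simp
    also have "\<dots> = (\<Sum>k\<in>insert i S'. outer (w k) (w k))"
    proof -
      have "(\<Sum>k\<in>S'. outer (w k) (w k)) = (\<Sum>k\<in>S'. outer (w' k) (w' k))"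
        using iS by (intro sum.cong) (auto simp: w_def)
      then show ?thesis using iS by (simp add: S'(1) w_def add.commute)
    qed
    finally have "X = (\<Sum>k\<in>insert i S'. outer (w k) (w k))" .
    moreover have "card (insert i S') \<le> rank X" using iS S'(2) rk by simp
    moreover have "\<forall>j\<in>insert i S'. X$j$j \<noteq> 0" using diagS \<open>X$i$i \<noteq> 0\<close> by blast
    ultimately show ?thesis by blast
  qed
qed

lemma outer_sum_mv: "(\<Sum>i\<in>S. outer (w i) (w i)) *v z = (\<Sum>i\<in>S. (w i \<bullet> z) *\<^sub>R w i)"
  by (simp add: sum_mv outer_mv)

lemma psd_factor:
  fixes X :: "real^'m^'m"
  assumes "psd X"
  obtains S :: "'m set" and w where "X = (\<Sum>i\<in>S. outer (w i) (w i))" "card S = rank X" "inj_on w S"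
    "independent (w ` S)"
proof -
  obtain S :: "'m set" and w where h: "X = (\<Sum>i\<in>S. outer (w i) (w i))" "card S \<le> rank X"
    using psd_factor_aux[OF assms] by blast
  have fS: "finite S" by simp
  have "range (\<lambda>z. X *v z) \<subseteq> span (w ` S)"
  proof clarify
    fix z
    show "X *v z \<in> span (w ` S)" unfolding h(1) outer_sum_mv
      by (intro span_sum span_mul span_base) auto
  qed
  then have "rank X \<le> dim (span (w ` S))" unfolding rank_dim_range by (rule dim_subset)
  also have "\<dots> = dim (w ` S)" by simp
  also have "\<dots> \<le> card (w ` S)" by (simp add: dim_le_card')
  also have "\<dots> \<le> card S" by (rule card_image_le[OF fS])
  finally have c: "rank X \<le> dim (w ` S)" "dim (w ` S) \<le> card (w ` S)" "card (w ` S) \<le> card S"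
    using \<open>dim (w ` S) \<le> card (w ` S)\<close> card_image_le[OF fS] \<open>rank X \<le> dim (span (w ` S))\<close> by auto
  have cS: "card S = rank X" using c h(2) by linarith
  have inj: "inj_on w S" using c h(2) by (intro eq_card_imp_inj_on[OF fS]) linarith
  have "independent (w ` S)"
  proof -
    have "card (w ` S) = dim (w ` S)" using c h(2) by linarith
    moreover have "finite (w ` S)" by simp
    ultimately show ?thesis using card_eq_dim[of "w ` S" "w ` S"] span_superset[of "w ` S"] by blast
  qed
  then show ?thesis using that h(1) cS inj by blast
qed




definition Phi :: "'n set \<Rightarrow> ('n \<Rightarrow> real^'n) \<Rightarrow> real^'n^'n \<Rightarrow> real^'n^'n" where
  "Phi S w B = (\<chi> a b. \<Sum>i\<in>S. \<Sum>j\<in>S. B$i$j * (w i $ a * w j $ b))"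

definition SymS :: "'n set \<Rightarrow> (real^'n^'n) set" where
  "SymS S = {B. symm B \<and> (\<forall>i j. B$i$j \<noteq> 0 \<longrightarrow> i \<in> S \<and> j \<in> S)}"

definition dg :: "real^'n^'n \<Rightarrow> real^'n" where
  "dg A = (\<chi> a. A$a$a)"

lemma indep_coeffs:
  fixes w :: "'a \<Rightarrow> 'b::euclidean_space"
  assumes ind: "independent (w ` S)" and inj: "inj_on w S" and fS: "finite S"
    and s: "(\<Sum>i\<in>S. c i *\<^sub>R w i) = 0" and i: "i \<in> S"
  shows "c i = 0"
proof -
  define u where "u v = c (inv_into S w v)" for v
  have "(\<Sum>v\<in>w ` S. u v *\<^sub>R v) = (\<Sum>i\<in>S. u (w i) *\<^sub>R w i)"
    by (rule sum.reindex[OF inj, unfolded comp_def])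
  also have "\<dots> = (\<Sum>i\<in>S. c i *\<^sub>R w i)"
    by (intro sum.cong) (auto simp: u_def inv_into_f_f[OF inj])
  finally have "(\<Sum>v\<in>w ` S. u v *\<^sub>R v) = 0" using s by simp
  moreover have h: "finite (w ` S) \<and> (\<forall>c. (\<Sum>v\<in>w ` S. c v *\<^sub>R v) = 0 \<longrightarrow> (\<forall>v\<in>w ` S. c v = 0))"
    using iffD1[OF independent_explicit ind] .
  ultimately have "\<forall>v\<in>w ` S. u v = 0" using h[THEN conjunct2, rule_format] by blast
  then have "u (w i) = 0" using i by blast
  then show ?thesis by (simp add: u_def inv_into_f_f[OF inj i])
qed

lemma span_coeffs:
  fixes w :: "'a \<Rightarrow> 'b::euclidean_space"
  assumes "finite S" "y \<in> span (w ` S)" and inj: "inj_on w S"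
  shows "\<exists>c. y = (\<Sum>i\<in>S. c i *\<^sub>R w i)"
proof -
  have "finite (w ` S)" using assms(1) by simp
  then obtain u where u: "y = (\<Sum>v\<in>w ` S. u v *\<^sub>R v)"
    using assms(2) span_finite by blast
  have "y = (\<Sum>i\<in>S. u (w i) *\<^sub>R w i)"
    unfolding u by (rule sum.reindex[OF inj, unfolded comp_def])
  then show ?thesis by (intro exI[of _ "\<lambda>i. u (w i)"])
qed

lemma orth_in_span:
  fixes w :: "'a \<Rightarrow> 'b::euclidean_space"
  assumes "\<And>y. (\<forall>j\<in>S. w j \<bullet> y = 0) \<Longrightarrow> v \<bullet> y = 0"
  shows "v \<in> span (w ` S)"
proof -
  obtain p q where pq: "p \<in> span (w ` S)" "\<And>x. x \<in> span (w ` S) \<Longrightarrow> orthogonal q x" "v = p + q"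
    using orthogonal_subspace_decomp_exists[of "w ` S" v] by metis
  have "\<forall>j\<in>S. w j \<bullet> q = 0" using pq(2) span_base by (metis image_eqI orthogonal_def inner_commute)
  then have "v \<bullet> q = 0" using assms by blast
  moreover have "p \<bullet> q = 0" using pq(2)[OF pq(1)] by (simp add: orthogonal_def inner_commute)
  ultimately have "q \<bullet> q = 0" using pq(3) by (simp add: inner_add_left)
  then show ?thesis using pq by simp
qed

lemma smat_mv: "((s::real) *\<^sub>R (A::real^'m^'k)) *v x = s *\<^sub>R (A *v x)"
  by (simp add: matrix_vector_mult_def vec_eq_iff sum_distrib_left mult_ac)

lemma absprod: "\<bar>(a::real) * b\<bar> \<le> (a^2 + b^2) / 2"
proof -
  have "0 \<le> (\<bar>a\<bar> - \<bar>b\<bar>)^2" by simp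
  then show ?thesis by (simp add: power2_eq_square abs_mult algebra_simps)
qed

lemma absprod2:
  assumes "a^2 \<le> Q" "b^2 \<le> Q" shows "\<bar>a * b\<bar> \<le> (Q::real)"
proof -
  have "(a^2 + b^2) / 2 \<le> Q" using assms by simp
  then show ?thesis using order.trans[OF absprod[of a b]] by blast
qed

locale fac =
  fixes X :: "real^('n::{finite,wellorder})^('n::{finite,wellorder})" and S :: "('n::{finite,wellorder}) set" and w :: "('n::{finite,wellorder}) \<Rightarrow> real^('n::{finite,wellorder})"
  assumes Xdef: "X = (\<Sum>i\<in>S. outer (w i) (w i))"
    and inj: "inj_on w S" and ind: "independent (w ` S)"
begin

lemma fS: "finite S" by simp

lemma Xmv: "X *v z = (\<Sum>i\<in>S. (w i \<bullet> z) *\<^sub>R w i)"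
  unfolding Xdef by (rule outer_sum_mv)

lemma ker_iff: "X *v z = 0 \<longleftrightarrow> (\<forall>i\<in>S. w i \<bullet> z = 0)"
  using indep_coeffs[OF ind inj fS, of "\<lambda>i. w i \<bullet> z"] by (auto simp: Xmv)

lemma X_entry: "X $ a $ b = (\<Sum>i\<in>S. w i $ a * w i $ b)"
  unfolding Xdef by (simp add: outer_def sum_component)

lemma symmX: "symm X"
  by (simp add: symm_def transpose_def vec_eq_iff X_entry mult.commute)

lemma Phi_mv: "Phi S w B *v z = (\<Sum>i\<in>S. (\<Sum>j\<in>S. B$i$j * (w j \<bullet> z)) *\<^sub>R w i)"
proof -
  have "(Phi S w B *v z) $ a = (\<Sum>i\<in>S. (\<Sum>j\<in>S. B$i$j * (w j \<bullet> z)) *\<^sub>R w i) $ a" for a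
  proof -
    have "(Phi S w B *v z) $ a = (\<Sum>b\<in>UNIV. \<Sum>i\<in>S. \<Sum>j\<in>S. B$i$j * (w i $ a * w j $ b) * z $ b)"
      by (simp add: Phi_def matrix_vector_mult_def sum_distrib_right)
    also have "\<dots> = (\<Sum>i\<in>S. \<Sum>j\<in>S. \<Sum>b\<in>UNIV. B$i$j * (w i $ a * w j $ b) * z $ b)"
      by (subst sum.swap) (subst (2) sum.swap, simp)
    also have "\<dots> = (\<Sum>i\<in>S. \<Sum>j\<in>S. (B$i$j * (w j \<bullet> z)) * w i $ a)"
      by (intro sum.cong refl) (simp add: inner_vec_def sum_distrib_left sum_distrib_right mult_ac)
    also have "\<dots> = (\<Sum>i\<in>S. (\<Sum>j\<in>S. B$i$j * (w j \<bullet> z)) * w i $ a)"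
      by (simp add: sum_distrib_right)
    also have "\<dots> = (\<Sum>i\<in>S. (\<Sum>j\<in>S. B$i$j * (w j \<bullet> z)) *\<^sub>R w i) $ a"
      by (simp add: sum_component)
    finally show ?thesis .
  qed
  then show ?thesis by (simp add: vec_eq_iff)
qed

lemma Phi_entry: "Phi S w B $ a $ b = (\<Sum>i\<in>S. \<Sum>j\<in>S. B$i$j * (w i $ a * w j $ b))"
  by (simp add: Phi_def)

lemma sum_half: "(\<Sum>i\<in>S. \<Sum>k\<in>S. (D i k + D k i) / 2 * (g i k::real)) =
   ((\<Sum>i\<in>S. \<Sum>k\<in>S. D i k * g i k) + (\<Sum>i\<in>S. \<Sum>k\<in>S. D k i * g i k)) / 2"
  by (simp add: sum.distrib add_divide_distrib sum_divide_distrib ring_distribs)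

lemma T_sub_Phi:
  assumes sA: "symm A" and dA: "\<forall>i. A$i$i = 0" and kA: "\<forall>z. X *v z = 0 \<longrightarrow> A *v z = 0"
  shows "\<exists>B\<in>SymS S. dg (Phi S w B) = 0 \<and> A = Phi S w B"
proof -
  have kill: "A *v y = 0" if "\<forall>j\<in>S. w j \<bullet> y = 0" for y
    using that ker_iff kA by blast
  have col: "A *v x \<in> span (w ` S)" for x
  proof (rule orth_in_span)
    fix y assume "\<forall>j\<in>S. w j \<bullet> y = 0"
    then have "A *v y = 0" by (rule kill)
    then show "(A *v x) \<bullet> y = 0" using symm_inner[OF sA, of y x] by (simp add: inner_commute)
  qed
  have "\<forall>b. \<exists>c. A *v axis b 1 = (\<Sum>i\<in>S. c i *\<^sub>R w i)"
    using span_coeffs[OF fS col inj] by blast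
  then obtain C where C: "\<And>b. A *v axis b 1 = (\<Sum>i\<in>S. C b i *\<^sub>R w i)"
    using choice[of "\<lambda>b c. A *v axis b 1 = (\<Sum>i\<in>S. c i *\<^sub>R w i)"] by blast
  define u where "u i = (\<chi> b. C b i)" for i
  have Aent: "A$a$b = (\<Sum>i\<in>S. w i $ a * u i $ b)" for a b
  proof -
    have "A$a$b = (A *v axis b 1) $ a" by (simp add: mv_column)
    also have "\<dots> = (\<Sum>i\<in>S. C b i * w i $ a)" unfolding C by (simp add: sum_component)
    finally show ?thesis by (simp add: u_def mult.commute)
  qed
  have Amv: "A *v y = (\<Sum>i\<in>S. (u i \<bullet> y) *\<^sub>R w i)" for y
  proof -
    have "(A *v y) $ a = (\<Sum>i\<in>S. (u i \<bullet> y) *\<^sub>R w i) $ a" for a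
    proof -
      have "(A *v y) $ a = (\<Sum>b\<in>UNIV. \<Sum>i\<in>S. w i $ a * u i $ b * y $ b)"
        by (simp add: matrix_vector_mult_def Aent sum_distrib_right)
      also have "\<dots> = (\<Sum>i\<in>S. \<Sum>b\<in>UNIV. w i $ a * u i $ b * y $ b)"
        by (rule sum.swap)
      also have "\<dots> = (\<Sum>i\<in>S. (u i \<bullet> y) * w i $ a)"
        by (intro sum.cong refl) (simp add: inner_vec_def sum_distrib_left sum_distrib_right mult_ac)
      also have "\<dots> = (\<Sum>i\<in>S. (u i \<bullet> y) *\<^sub>R w i) $ a"
        by (simp add: sum_component)
      finally show ?thesis .
    qed
    then show ?thesis using vec_eq_iff by blast
  qed
  have uspan: "u i \<in> span (w ` S)" if iS: "i \<in> S" for i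
  proof (rule orth_in_span)
    fix y assume "\<forall>j\<in>S. w j \<bullet> y = 0"
    then have "(\<Sum>i\<in>S. (u i \<bullet> y) *\<^sub>R w i) = 0" using kill Amv by metis
    then show "u i \<bullet> y = 0" using indep_coeffs[OF ind inj fS, where c="\<lambda>i. u i \<bullet> y"] iS by blast
  qed
  have "\<forall>i. \<exists>c. i \<in> S \<longrightarrow> u i = (\<Sum>k\<in>S. c k *\<^sub>R w k)"
    using span_coeffs[OF fS uspan inj] by blast
  then obtain D where D: "\<And>i. i \<in> S \<Longrightarrow> u i = (\<Sum>k\<in>S. D i k *\<^sub>R w k)"
    using choice[of "\<lambda>i c. i \<in> S \<longrightarrow> u i = (\<Sum>k\<in>S. c k *\<^sub>R w k)"] by blast
  have Aent2: "A$a$b = (\<Sum>i\<in>S. \<Sum>k\<in>S. D i k * (w i $ a * w k $ b))" for a b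
  proof -
    have "A$a$b = (\<Sum>i\<in>S. w i $ a * (\<Sum>k\<in>S. D i k * w k $ b))"
      unfolding Aent by (intro sum.cong refl) (simp add: D sum_component)
    then show ?thesis by (simp add: sum_distrib_left mult_ac)
  qed
  define B where "B = (\<chi> i k. if i \<in> S \<and> k \<in> S then (D i k + D k i) / 2 else 0)"
  have BS: "B \<in> SymS S"
    unfolding SymS_def symm_def B_def by (auto simp: vec_eq_iff transpose_def add.commute)
  have PB: "Phi S w B = A"
  proof -
    have "Phi S w B $ a $ b = A $ a $ b" for a b
    proof -
      have "Phi S w B $ a $ b = (\<Sum>i\<in>S. \<Sum>k\<in>S. (D i k + D k i) / 2 * (w i $ a * w k $ b))"
        unfolding Phi_entry by (intro sum.cong refl) (simp add: B_def)
      also have "\<dots> = ((\<Sum>i\<in>S. \<Sum>k\<in>S. D i k * (w i $ a * w k $ b)) +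
          (\<Sum>i\<in>S. \<Sum>k\<in>S. D k i * (w i $ a * w k $ b))) / 2" by (rule sum_half)
      also have "(\<Sum>i\<in>S. \<Sum>k\<in>S. D k i * (w i $ a * w k $ b)) = A $ b $ a"
        unfolding Aent2 by (subst sum.swap) (simp add: mult_ac)
      also have "A $ b $ a = A $ a $ b" using sA unfolding symm_def by (metis transpose_def vec_lambda_beta)
      finally show ?thesis using Aent2[of a b] by simp
    qed
    then show ?thesis by (simp add: vec_eq_iff)
  qed
  have "dg (Phi S w B) = 0" using PB dA by (simp add: dg_def vec_eq_iff)
  then show ?thesis using BS PB by blast
qed

lemma quadX: "z \<bullet> (X *v z) = (\<Sum>i\<in>S. (w i \<bullet> z)^2)"
  unfolding Xmv by (simp add: inner_sum_right power2_eq_square inner_commute[of z])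

lemma quadPhi: "z \<bullet> (Phi S w B *v z) = (\<Sum>i\<in>S. \<Sum>j\<in>S. B$i$j * (w j \<bullet> z) * (w i \<bullet> z))"
proof -
  have "z \<bullet> (Phi S w B *v z) = (\<Sum>i\<in>S. (\<Sum>j\<in>S. B$i$j * (w j \<bullet> z)) * (z \<bullet> w i))"
    unfolding Phi_mv by (simp add: inner_sum_right)
  also have "\<dots> = (\<Sum>i\<in>S. \<Sum>j\<in>S. B$i$j * (w j \<bullet> z) * (w i \<bullet> z))"
    by (simp add: sum_distrib_right inner_commute[of z])
  finally show ?thesis .
qed

lemma symm_Phi: "B \<in> SymS S \<Longrightarrow> symm (Phi S w B)"
proof -
  assume "B \<in> SymS S"
  then have sB0: "symm B" by (simp add: SymS_def)
  have sB: "B$j$i = B$i$j" for i j using sB0 unfolding symm_def by (metis transpose_def vec_lambda_beta)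
  have "Phi S w B $ b $ a = Phi S w B $ a $ b" for a b
  proof -
    have "Phi S w B $ b $ a = (\<Sum>j\<in>S. \<Sum>i\<in>S. B$i$j * (w i $ b * w j $ a))"
      unfolding Phi_entry by (rule sum.swap)
    also have "\<dots> = (\<Sum>j\<in>S. \<Sum>i\<in>S. B$j$i * (w j $ a * w i $ b))"
      by (intro sum.cong refl) (metis sB mult.commute)
    also have "\<dots> = Phi S w B $ a $ b" unfolding Phi_entry ..
    finally show ?thesis .
  qed
  then show ?thesis by (simp add: symm_def transpose_def vec_eq_iff)
qed

lemma Phi_in_pert:
  assumes d1: "\<forall>i. X$i$i = 1" and BS: "B \<in> SymS S" and dB: "dg (Phi S w B) = 0"
  shows "Phi S w B \<in> pert elliptope2 X"
proof -
  let ?A = "Phi S w B"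
  have sA: "symm ?A" by (rule symm_Phi[OF BS])
  have Ad: "?A$i$i = 0" for i using dB by (simp add: dg_def vec_eq_iff)
  define c where "c = (\<Sum>i\<in>S. \<Sum>j\<in>S. \<bar>B$i$j\<bar>)"
  have c0: "c \<ge> 0" unfolding c_def by (intro sum_nonneg) auto
  have bound: "\<bar>z \<bullet> (?A *v z)\<bar> \<le> c * (z \<bullet> (X *v z))" for z
  proof -
    define Q where "Q = (\<Sum>k\<in>S. (w k \<bullet> z)^2)"
    have sq: "(w k \<bullet> z)^2 \<le> Q" if "k \<in> S" for k
      unfolding Q_def using that by (intro member_le_sum) auto
    have pr: "\<bar>(w j \<bullet> z) * (w i \<bullet> z)\<bar> \<le> Q" if "i \<in> S" "j \<in> S" for i j
      using absprod2[OF sq[OF that(2)] sq[OF that(1)]] .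
    have "\<bar>z \<bullet> (?A *v z)\<bar> \<le> (\<Sum>i\<in>S. \<Sum>j\<in>S. \<bar>B$i$j * (w j \<bullet> z) * (w i \<bullet> z)\<bar>)"
      unfolding quadPhi by (rule order.trans[OF sum_abs]) (intro sum_mono sum_abs)
    also have "\<dots> \<le> (\<Sum>i\<in>S. \<Sum>j\<in>S. \<bar>B$i$j\<bar> * Q)"
    proof (intro sum_mono)
      fix i j assume "i \<in> S" "j \<in> S"
      then show "\<bar>B$i$j * (w j \<bullet> z) * (w i \<bullet> z)\<bar> \<le> \<bar>B$i$j\<bar> * Q"
        using pr by (simp add: abs_mult mult.assoc mult_left_mono)
    qed
    also have "\<dots> = c * Q" by (simp add: c_def sum_distrib_right)
    finally show ?thesis by (simp add: Q_def quadX)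
  qed
  have key: "X + s *\<^sub>R ?A \<in> elliptope2" if s: "\<bar>s\<bar> * (c + 1) < 1" for s
  proof -
    have "symm (X + s *\<^sub>R ?A)" using symmX sA by (simp add: symm_def transpose_def vec_eq_iff)
    moreover have "0 \<le> z \<bullet> ((X + s *\<^sub>R ?A) *v z)" for z
    proof -
      have q0: "0 \<le> z \<bullet> (X *v z)" unfolding quadX by (intro sum_nonneg) auto
      have "\<bar>s * (z \<bullet> (?A *v z))\<bar> \<le> \<bar>s\<bar> * (c * (z \<bullet> (X *v z)))"
        using bound[of z] by (simp add: abs_mult mult_left_mono)
      also have "\<dots> \<le> z \<bullet> (X *v z)"
      proof -
        have "\<bar>s\<bar> * c \<le> 1" using s c0 by (smt (verit) mult_nonneg_nonneg abs_ge_zero distrib_left mult.right_neutral)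
        then have "(\<bar>s\<bar> * c) * (z \<bullet> (X *v z)) \<le> 1 * (z \<bullet> (X *v z))" using q0 by (intro mult_right_mono)
        then show ?thesis by (simp add: mult.assoc)
      qed
      finally show ?thesis
        by (simp add: matrix_vector_mult_add_rdistrib smat_mv inner_add_right)
    qed
    ultimately have "psd (X + s *\<^sub>R ?A)" by (simp add: psd_def)
    moreover have "(X + s *\<^sub>R ?A) $ i $ i = 1" for i using d1 Ad by simp
    ultimately show ?thesis by (simp add: elliptope2_def)
  qed
  have "\<forall>t. 0 < t \<and> t < 1 / (c + 1) \<longrightarrow> X + t *\<^sub>R ?A \<in> elliptope2 \<and> X - t *\<^sub>R ?A \<in> elliptope2"
  proof (intro allI impI)
    fix t assume t: "0 < t \<and> t < 1 / (c + 1)"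
    then have "\<bar>t\<bar> * (c + 1) < 1" "\<bar>-t\<bar> * (c + 1) < 1" using c0 by (auto simp: field_simps)
    then show "X + t *\<^sub>R ?A \<in> elliptope2 \<and> X - t *\<^sub>R ?A \<in> elliptope2"
      using key[of t] key[of "-t"] by simp
  qed
  moreover have "1 / (c + 1) > 0" using c0 by simp
  ultimately show ?thesis unfolding pert_def using sA by blast
qed

end

lemma pert_sub_T:
  fixes X :: "real^'n^'n"
  assumes pX: "psd X" and d1: "\<forall>i. X$i$i = 1" and A: "A \<in> pert elliptope2 X"
  shows "symm A \<and> (\<forall>i. A$i$i = 0) \<and> (\<forall>z. X *v z = 0 \<longrightarrow> A *v z = 0)"
proof -
  obtain e where e: "e > 0" "\<forall>t. 0 < t \<and> t < e \<longrightarrow> X + t *\<^sub>R A \<in> elliptope2 \<and> X - t *\<^sub>R A \<in> elliptope2"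
    and sA: "symm A" using A unfolding pert_def by blast
  define t where "t = e / 2"
  have t: "0 < t" "t < e" using e(1) by (auto simp: t_def)
  have P: "psd (X + t *\<^sub>R A)" "\<forall>i. (X + t *\<^sub>R A)$i$i = 1"
    and M: "psd (X - t *\<^sub>R A)"
  proof -
    have h: "X + t *\<^sub>R A \<in> elliptope2 \<and> X - t *\<^sub>R A \<in> elliptope2" using e(2) t by blast
    then show "psd (X + t *\<^sub>R A)" "\<forall>i. (X + t *\<^sub>R A)$i$i = 1" "psd (X - t *\<^sub>R A)"
      unfolding elliptope2_def by simp_all
  qed
  have "A$i$i = 0" for i
  proof -
    have "X$i$i + t * A$i$i = 1" using P(2) by simp
    then have "t * A$i$i = 0" using d1 by simp
    then show ?thesis using t(1) by simp
  qed
  moreover have "A *v z = 0" if z: "X *v z = 0" for z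
  proof -
    have p1: "z \<bullet> ((X + t *\<^sub>R A) *v z) = t * (z \<bullet> (A *v z))"
      using z by (simp add: matrix_vector_mult_add_rdistrib smat_mv inner_add_right)
    have p2: "z \<bullet> ((X - t *\<^sub>R A) *v z) = - t * (z \<bullet> (A *v z))"
      using z by (simp add: matrix_vector_mult_diff_rdistrib smat_mv inner_diff_right)
    have "0 \<le> t * (z \<bullet> (A *v z))" "0 \<le> - t * (z \<bullet> (A *v z))"
      using P(1) M p1 p2 unfolding psd_def by metis+
    then have "z \<bullet> ((X + t *\<^sub>R A) *v z) = 0" using p1 by linarith
    then have "(X + t *\<^sub>R A) *v z = 0" using psd_zero[OF P(1)] by blast
    then have "t *\<^sub>R (A *v z) = 0" using z by (simp add: matrix_vector_mult_add_rdistrib smat_mv)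
    then show ?thesis using t(1) by simp
  qed
  ultimately show ?thesis using sA by blast
qed




lemma sum_pairs: "(\<Sum>p\<in>(UNIV::('a::finite \<times> 'b::finite) set). g p) = (\<Sum>i\<in>UNIV. \<Sum>j\<in>UNIV. g (i, j))"
  by (subst sum.cartesian_product) simp

lemma kron_inner: "kron x \<bullet> kron y = (x \<bullet> y)^2"
proof -
  have "kron x \<bullet> kron y = (\<Sum>i\<in>UNIV. \<Sum>j\<in>UNIV. (x$i * y$i) * (x$j * y$j))"
    by (simp add: inner_vec_def kron_def sum_pairs mult_ac)
  also have "\<dots> = (x \<bullet> y)^2"
    by (simp add: inner_vec_def power2_eq_square sum_product)
  finally show ?thesis .
qed

lemma card_triangle:
  fixes S :: "'a::linorder set"
  assumes fS: "finite S"
  shows "2 * card {p\<in>S \<times> S. fst p \<le> snd p} = card S * (card S + 1)"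
proof -
  let ?U = "{p\<in>S \<times> S. fst p \<le> snd p}"
  let ?L = "{p\<in>S \<times> S. snd p < fst p}"
  let ?Lt = "{p\<in>S \<times> S. fst p < snd p}"
  let ?D = "{p\<in>S \<times> S. fst p = snd p}"
  have f: "finite (S \<times> S)" using fS by simp
  have "card ?U + card ?L = card (S \<times> S)"
    by (subst card_Un_disjoint[symmetric]) (auto intro: finite_subset[OF _ f] arg_cong[where f=card])
  then have 1: "card ?U + card ?L = card S * card S" by (simp add: card_cartesian_product)
  have "?L = (\<lambda>(a, b). (b, a)) ` ?Lt" by (auto simp: image_def)
  moreover have "inj_on (\<lambda>(a, b). (b, a)) ?Lt" by (auto simp: inj_on_def)
  ultimately have 2: "card ?L = card ?Lt" by (simp add: card_image)
  have "card ?U = card ?Lt + card ?D"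
    by (subst card_Un_disjoint[symmetric]) (auto intro: finite_subset[OF _ f] arg_cong[where f=card])
  moreover have "?D = (\<lambda>i. (i, i)) ` S" by auto
  then have "card ?D = card S" by (simp add: card_image inj_on_def)
  ultimately have 3: "card ?U = card ?Lt + card S" by simp
  from 1 2 3 show ?thesis by (simp add: algebra_simps)
qed

lemma linear_dg: "linear dg"
  by (rule linearI) (simp_all add: dg_def vec_eq_iff)

lemma subspace_SymS: "subspace (SymS S)"
  unfolding subspace_def SymS_def symm_def by (auto simp: vec_eq_iff transpose_def) (metis add.left_neutral)+

lemma dim_SymS:
  fixes S :: "'n::{finite,wellorder} set"
  shows "dim (SymS S) = card S * (card S + 1) div 2"
proof -
  define L where "L B = (\<chi> p. if fst p \<le> snd p then (B::real^('n::{finite,wellorder})^('n::{finite,wellorder})) $ fst p $ snd p else 0)" for B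
  define d where "d = {p. fst p \<in> S \<and> snd p \<in> S \<and> fst p \<le> snd p}"
  have lin: "linear L" by (rule linearI) (simp_all add: L_def vec_eq_iff)
  have symE: "B $ j $ i = B $ i $ j" if "B \<in> SymS S" for B i j
  proof -
    have "symm B" using that by (simp add: SymS_def)
    then show ?thesis unfolding symm_def by (metis transpose_def vec_lambda_beta)
  qed
  have supE: "B $ i $ j = 0" if "B \<in> SymS S" "i \<notin> S \<or> j \<notin> S" for B i j
    using that unfolding SymS_def by blast
  have img: "L ` SymS S = {y. \<forall>p. p \<notin> d \<longrightarrow> y $ p = 0}"
  proof
    show "L ` SymS S \<subseteq> {y. \<forall>p. p \<notin> d \<longrightarrow> y $ p = 0}"
      using supE by (auto simp: L_def d_def)
    show "{y. \<forall>p. p \<notin> d \<longrightarrow> y $ p = 0} \<subseteq> L ` SymS S"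
    proof
      fix y :: "real^(('n::{finite,wellorder}) \<times> ('n::{finite,wellorder}))" assume y: "y \<in> {y. \<forall>p. p \<notin> d \<longrightarrow> y $ p = 0}"
      define B where "B = (\<chi> i j. if i \<le> j then y $ (i, j) else y $ (j, i))"
      have "B \<in> SymS S"
        unfolding SymS_def symm_def
      proof (intro CollectI conjI)
        show "transpose B = B"
          by (auto simp: vec_eq_iff transpose_def B_def)
      next
        show "\<forall>i j. B $ i $ j \<noteq> 0 \<longrightarrow> i \<in> S \<and> j \<in> S" using y by (auto simp: B_def d_def split: if_splits)
      qed
      moreover have "L B = y" using y by (auto simp: vec_eq_iff L_def B_def d_def)
      ultimately show "y \<in> L ` SymS S" by blast
    qed
  qed
  have inj: "inj_on L (span (SymS S))"
  proof -
    have spS: "span (SymS S) = SymS S" using span_eq_iff[THEN iffD2, OF subspace_SymS] .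
    have injS: "inj_on L (SymS S)"
    proof (rule inj_onI)
      fix B C assume BC: "B \<in> SymS S" "C \<in> SymS S" "L B = L C"
      have e: "B $ i $ j = C $ i $ j" if "i \<le> j" for i j
      proof -
        have "L B $ (i, j) = L C $ (i, j)" using BC(3) by simp
        then show ?thesis using that by (simp add: L_def)
      qed
      have "B $ i $ j = C $ i $ j" for i j
      proof (cases "i \<le> j")
        case True then show ?thesis by (rule e)
      next
        case False then have "j \<le> i" by simp
        then show ?thesis using e symE[OF BC(1)] symE[OF BC(2)] by metis
      qed
      then show "B = C" by (simp add: vec_eq_iff)
    qed
    show ?thesis unfolding spS by (rule injS)
  qed
  have "dim (SymS S) = dim (L ` SymS S)" using dim_image_eq[OF lin inj] by simp
  also have "\<dots> = card d" unfolding img dim_vec_eq[symmetric] by (rule dim_substandard_cart)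
  also have "d = {p\<in>S \<times> S. fst p \<le> snd p}" by (auto simp: d_def)
  also have "card \<dots> = card S * (card S + 1) div 2"
    using card_triangle[of S] by simp
  finally show ?thesis .
qed

lemma sum_if_S: "(\<Sum>i\<in>(UNIV::'a::finite set). if i \<in> S then f i else (0::real)) = (\<Sum>i\<in>S. f i)"
  using sum.inter_restrict[of UNIV f S] by simp

context fac
begin

lemma linear_Phi: "linear (Phi S w)"
  by (rule linearI) (simp_all add: vec_eq_iff Phi_entry sum.distrib ring_distribs sum_distrib_left mult.assoc)

lemma linear_dgPhi: "linear (\<lambda>B. dg (Phi S w B))"
  using linear_compose[OF linear_Phi linear_dg] by (simp add: o_def)

lemma Phi_zero:
  assumes BS: "B \<in> SymS S" and P0: "Phi S w B = 0"
  shows "B = 0"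
proof -
  have sup: "B $ i $ j = 0" if "i \<notin> S \<or> j \<notin> S" for i j
    using BS that unfolding SymS_def by blast
  have inS: "B $ i $ j = 0" if ij: "i \<in> S" "j \<in> S" for i j
  proof -
    define v where "v = (\<Sum>k\<in>S. B$i$k *\<^sub>R w k)"
    have "v \<bullet> z = 0" for z
    proof -
      have "(\<Sum>i\<in>S. (\<Sum>j\<in>S. B$i$j * (w j \<bullet> z)) *\<^sub>R w i) = 0"
        using P0 Phi_mv[of B z] by simp
      then have "(\<Sum>j\<in>S. B$i$j * (w j \<bullet> z)) = 0"
        using indep_coeffs[OF ind inj fS, where c="\<lambda>i. \<Sum>j\<in>S. B$i$j * (w j \<bullet> z)"] ij(1) by blast
      then show ?thesis by (simp add: v_def inner_sum_left)
    qed
    then have "v = 0" by (metis inner_eq_zero_iff)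
    then show ?thesis
      using indep_coeffs[OF ind inj fS, where c="\<lambda>k. B$i$k"] ij(2) by (simp add: v_def)
  qed
  show ?thesis using sup inS by (simp add: vec_eq_iff) blast
qed

lemma inj_Phi: "inj_on (Phi S w) (SymS S)"
proof (rule inj_onI)
  fix B C assume BC: "B \<in> SymS S" "C \<in> SymS S" "Phi S w B = Phi S w C"
  have "B - C \<in> SymS S" using subspace_diff[OF subspace_SymS BC(1) BC(2)] .
  moreover have "Phi S w (B - C) = 0" using BC(3) linear_diff[OF linear_Phi] by simp
  ultimately have "B - C = 0" by (rule Phi_zero)
  then show "B = C" by simp
qed

definition rowv :: "('n::{finite,wellorder}) \<Rightarrow> real^('n::{finite,wellorder})" where
  "rowv a = (\<chi> i. if i \<in> S then w i $ a else 0)"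

definition Km :: "real^(('n::{finite,wellorder}) \<times> ('n::{finite,wellorder}))^('n::{finite,wellorder})" where
  "Km = (\<chi> a. kron (rowv a))"

lemma X_rowv: "X $ a $ b = rowv a \<bullet> rowv b"
proof -
  have "rowv a \<bullet> rowv b = (\<Sum>i\<in>UNIV. if i \<in> S then w i $ a * w i $ b else 0)"
    unfolding inner_vec_def rowv_def by (intro sum.cong refl) simp
  then show ?thesis by (simp add: sum_if_S X_entry)
qed

lemma hsq_Km: "hsq X = Km ** transpose Km"
proof -
  have "hsq X $ a $ b = (Km ** transpose Km) $ a $ b" for a b
  proof -
    have "(Km ** transpose Km) $ a $ b = kron (rowv a) \<bullet> kron (rowv b)"
      by (simp add: matrix_matrix_mult_def transpose_def Km_def inner_vec_def)
    then show ?thesis by (simp add: kron_inner hsq_def X_rowv)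
  qed
  then show ?thesis by (simp add: vec_eq_iff)
qed

lemma Km_mv: "(Km *v y) $ a = (\<Sum>i\<in>UNIV. \<Sum>j\<in>UNIV. rowv a $ i * rowv a $ j * y $ (i, j))"
  by (simp add: matrix_vector_mult_def Km_def kron_def sum_pairs)

lemma dg_Km: "dg (Phi S w B) = Km *v vecM B"
proof -
  have "(Km *v vecM B) $ a = dg (Phi S w B) $ a" for a
  proof -
    have "(Km *v vecM B) $ a = (\<Sum>i\<in>UNIV. if i \<in> S then (\<Sum>j\<in>UNIV. if j \<in> S then
        B $ i $ j * (w i $ a * w j $ a) else 0) else 0)"
      unfolding Km_mv by (intro sum.cong refl) (auto simp: rowv_def vecM_def intro!: sum.cong)
    also have "\<dots> = dg (Phi S w B) $ a"
      by (simp add: sum_if_S dg_def Phi_entry)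
    finally show ?thesis .
  qed
  then show ?thesis by (simp add: vec_eq_iff)
qed

definition Psym :: "real^(('n::{finite,wellorder}) \<times> ('n::{finite,wellorder})) \<Rightarrow> real^('n::{finite,wellorder})^('n::{finite,wellorder})" where
  "Psym y = (\<chi> i j. if i \<in> S \<and> j \<in> S then (y $ (i, j) + y $ (j, i)) / 2 else 0)"

lemma Psym_in: "Psym y \<in> SymS S"
  unfolding SymS_def symm_def Psym_def by (auto simp: vec_eq_iff transpose_def add.commute)

lemma Km_Psym: "Km *v vecM (Psym y) = Km *v y"
proof -
  have "(Km *v vecM (Psym y)) $ a = (Km *v y) $ a" for a
  proof -
    let ?r = "rowv a"
    have z: "?r $ i = 0" if "i \<notin> S" for i using that by (simp add: rowv_def)
    have "(Km *v vecM (Psym y)) $ a = (\<Sum>i\<in>UNIV. \<Sum>j\<in>UNIV. (?r $ i * ?r $ j * y $ (i, j) + ?r $ i * ?r $ j * y $ (j, i)) / 2)"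
      unfolding Km_mv
    proof (intro sum.cong refl)
      fix i j
      show "?r $ i * ?r $ j * vecM (Psym y) $ (i, j) = (?r $ i * ?r $ j * y $ (i, j) + ?r $ i * ?r $ j * y $ (j, i)) / 2"
        using z[of i] z[of j] by (cases "i \<in> S \<and> j \<in> S") (auto simp: vecM_def Psym_def algebra_simps)
    qed
    also have "\<dots> = ((\<Sum>i\<in>UNIV. \<Sum>j\<in>UNIV. ?r $ i * ?r $ j * y $ (i, j)) + (\<Sum>i\<in>UNIV. \<Sum>j\<in>UNIV. ?r $ i * ?r $ j * y $ (j, i))) / 2"
      by (simp add: sum.distrib add_divide_distrib sum_divide_distrib)
    also have "(\<Sum>i\<in>UNIV. \<Sum>j\<in>UNIV. ?r $ i * ?r $ j * y $ (j, i)) = (\<Sum>i\<in>UNIV. \<Sum>j\<in>UNIV. ?r $ i * ?r $ j * y $ (i, j))"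
      by (subst sum.swap) (simp add: mult.commute)
    finally show ?thesis unfolding Km_mv by simp
  qed
  then show ?thesis by (simp add: vec_eq_iff)
qed

lemma dgPhi_img: "(\<lambda>B. dg (Phi S w B)) ` SymS S = range (\<lambda>y. Km *v y)"
proof
  show "(\<lambda>B. dg (Phi S w B)) ` SymS S \<subseteq> range (\<lambda>y. Km *v y)" using dg_Km by auto
  show "range (\<lambda>y. Km *v y) \<subseteq> (\<lambda>B. dg (Phi S w B)) ` SymS S"
  proof clarify
    fix y
    have "Km *v y = dg (Phi S w (Psym y))" using dg_Km Km_Psym by simp
    then show "Km *v y \<in> (\<lambda>B. dg (Phi S w B)) ` SymS S" using Psym_in by blast
  qed
qed

lemma dim_dgPhi: "dim ((\<lambda>B. dg (Phi S w B)) ` SymS S) = rank (hsq X)"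
proof -
  have "dim ((\<lambda>B. dg (Phi S w B)) ` SymS S) = rank Km" unfolding dgPhi_img by (simp add: rank_dim_range)
  then show ?thesis by (simp add: hsq_Km rank_AAT)
qed

end




context fac
begin

lemma dgPhi_add: "dg (Phi S w (x + y)) = dg (Phi S w x) + dg (Phi S w y)"
  using linear_add[OF linear_dgPhi, of x y] by simp
lemma dgPhi_scale: "dg (Phi S w (c *\<^sub>R x)) = c *\<^sub>R dg (Phi S w x)"
  using linear_scale[OF linear_dgPhi, of c x] by simp
lemma dgPhi_0: "dg (Phi S w 0) = 0"
  using linear_0[OF linear_dgPhi] by simp

lemma subspace_Z: "subspace {B\<in>SymS S. dg (Phi S w B) = 0}"
  using subspace_SymS[of S] unfolding subspace_def
  by (auto simp: dgPhi_add dgPhi_scale dgPhi_0)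

lemma pert_eq:
  assumes pX: "psd X" and d1: "\<forall>i. X$i$i = 1"
  shows "pert elliptope2 X = Phi S w ` {B\<in>SymS S. dg (Phi S w B) = 0}"
proof
  show "pert elliptope2 X \<subseteq> Phi S w ` {B\<in>SymS S. dg (Phi S w B) = 0}"
  proof
    fix A assume "A \<in> pert elliptope2 X"
    then have "symm A \<and> (\<forall>i. A$i$i = 0) \<and> (\<forall>z. X *v z = 0 \<longrightarrow> A *v z = 0)"
      using pert_sub_T[OF pX d1] by blast
    then obtain B where "B \<in> SymS S" "dg (Phi S w B) = 0" "A = Phi S w B"
      using T_sub_Phi by blast
    then show "A \<in> Phi S w ` {B\<in>SymS S. dg (Phi S w B) = 0}" by blast
  qed
  show "Phi S w ` {B\<in>SymS S. dg (Phi S w B) = 0} \<subseteq> pert elliptope2 X"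
    using Phi_in_pert[OF d1] by blast
qed

lemma subspace_pert:
  assumes pX: "psd X" and d1: "\<forall>i. X$i$i = 1"
  shows "subspace (pert elliptope2 X)"
  unfolding pert_eq[OF assms] by (rule linear_subspace_image[OF linear_Phi subspace_Z])

lemma dim_pert:
  assumes pX: "psd X" and d1: "\<forall>i. X$i$i = 1"
  shows "dim (pert elliptope2 X) + rank (hsq X) = card S * (card S + 1) div 2"
proof -
  let ?Z = "{B\<in>SymS S. dg (Phi S w B) = 0}"
  have spZ: "span ?Z = ?Z" using span_eq_iff[THEN iffD2, OF subspace_Z] .
  have injZ: "inj_on (Phi S w) (span ?Z)" unfolding spZ by (rule inj_on_subset[OF inj_Phi]) blast
  have "dim (pert elliptope2 X) = dim ?Z"
    unfolding pert_eq[OF assms] by (rule dim_image_eq[OF linear_Phi injZ])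
  moreover have "dim ((\<lambda>B. dg (Phi S w B)) ` SymS S) + dim ?Z = dim (SymS S)"
    by (rule rank_nullity_sub[OF linear_dgPhi subspace_SymS])
  ultimately show ?thesis using dim_dgPhi dim_SymS[of S] by simp
qed

end




lemma pm_perm:
  assumes "pseudomoment4 Y" "\<sigma> permutes {0..<4::nat}"
  shows "Y $ ([i,j,k,l] ! \<sigma> 0, [i,j,k,l] ! \<sigma> 1) $ ([i,j,k,l] ! \<sigma> 2, [i,j,k,l] ! \<sigma> 3) = Y$(i,j)$(k,l)"
  using assms unfolding pseudomoment4_def Let_def by blast

lemma pm_S01: assumes "pseudomoment4 Y" shows "Y$(j,i)$(k,l) = Y$(i,j)$(k,l)"
proof -
  have p: "Transposition.transpose (0::nat) 1 permutes {0..<4}" by (rule permutes_swap_id) auto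
  have "Transposition.transpose (0::nat) 1 0 = 1" "Transposition.transpose (0::nat) 1 1 = 0"
       "Transposition.transpose (0::nat) 1 2 = 2" "Transposition.transpose (0::nat) 1 3 = 3"
    by (simp_all add: Transposition.transpose_def)
  then show ?thesis using pm_perm[OF assms p, of i j k l] by simp
qed

lemma pm_S12: assumes "pseudomoment4 Y" shows "Y$(i,k)$(j,l) = Y$(i,j)$(k,l)"
proof -
  have p: "Transposition.transpose (1::nat) 2 permutes {0..<4}" by (rule permutes_swap_id) auto
  have "Transposition.transpose (1::nat) 2 0 = 0" "Transposition.transpose (1::nat) 2 1 = 2"
       "Transposition.transpose (1::nat) 2 2 = 1" "Transposition.transpose (1::nat) 2 3 = 3"
    by (simp_all add: Transposition.transpose_def)
  then show ?thesis using pm_perm[OF assms p, of i j k l] by simp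
qed

lemma pm_psd: "pseudomoment4 Y \<Longrightarrow> psd Y" by (simp add: pseudomoment4_def)

lemma pm_sym: assumes "pseudomoment4 Y" shows "Y$q$p = Y$p$q"
proof -
  have "symm Y" using pm_psd[OF assms] by (simp add: psd_def)
  then have t: "transpose Y = Y" by (simp add: symm_def)
  have "Y$p$q = (transpose Y)$q$p" by (simp add: Finite_Cartesian_Product.transpose_def)
  then show ?thesis using t by simp
qed

lemma pm_S23: assumes "pseudomoment4 Y" shows "Y$(i,j)$(l,k) = Y$(i,j)$(k,l)"
proof -
  have "Y$(i,j)$(l,k) = Y$(l,k)$(i,j)" by (rule pm_sym[OF assms])
  also have "\<dots> = Y$(k,l)$(i,j)" by (rule pm_S01[OF assms])
  also have "\<dots> = Y$(i,j)$(k,l)" by (rule pm_sym[OF assms])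
  finally show ?thesis .
qed

lemma pm_C2: "pseudomoment4 Y \<Longrightarrow> Y $ p $ (k,k) = Y $ p $ (l,l)"
  unfolding pseudomoment4_def by (cases p) blast

lemma pm_C3: "pseudomoment4 Y \<Longrightarrow> Y $ (i,i) $ (i,i) = 1"
  unfolding pseudomoment4_def by blast

lemma delta_sum: "(\<Sum>k\<in>(UNIV::'a::finite set). (if k = c then (1::real) else 0) * f k) = f c"
proof -
  have "(\<Sum>k\<in>UNIV. (if k = c then (1::real) else 0) * f k) = (\<Sum>k\<in>UNIV. if k = c then f k else 0)"
    by (intro sum.cong) auto
  then show ?thesis by simp
qed

lemma delta_sum2: "(\<Sum>k\<in>(UNIV::'a::finite set). f k * (if k = c then (1::real) else 0)) = f c"
  using delta_sum[of c f] by (simp add: mult.commute)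

definition Ea :: "'n::finite \<Rightarrow> real^'n^('n \<times> 'n)" where
  "Ea a = (\<chi> p j. if p = (a, j) then 1 else 0)"

lemma Ea_mv: "(Y *v (Ea a *v z)) $ q = (\<Sum>j\<in>UNIV. Y $ q $ (a, j) * z $ j)"
proof -
  have "Y *v (Ea a *v z) = (Y ** Ea a) *v z" by (simp add: matrix_vector_mul_assoc)
  moreover have "(Y ** Ea a) $ q $ j = Y $ q $ (a, j)" for j
    by (simp add: matrix_matrix_mult_def Ea_def if_distrib sum.delta' cong: if_cong)
  ultimately show ?thesis by (simp add: matrix_vector_mult_def)
qed

lemma EYE:
  fixes X :: "real^'n::finite^'n"
  assumes "\<And>j j'. Y $ (a, j) $ (a, j') = X $ j $ j'"
  shows "z \<bullet> (X *v z) = (Ea a *v z) \<bullet> (Y *v (Ea a *v z))"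
proof -
  have "X = transpose (Ea a) ** (Y ** Ea a)"
  proof -
    have "(transpose (Ea a) ** (Y ** Ea a)) $ j $ j' = X $ j $ j'" for j j'
    proof -
      have e: "(Y ** Ea a) $ q $ j' = Y $ q $ (a, j')" for q
        by (simp add: matrix_matrix_mult_def Ea_def if_distrib sum.delta' cong: if_cong)
      have "(transpose (Ea a) ** (Y ** Ea a)) $ j $ j' = Y $ (a, j) $ (a, j')"
        by (simp add: matrix_matrix_mult_def transpose_def Ea_def e delta_sum delta_sum2)
      then show ?thesis using assms by simp
    qed
    then show ?thesis by (simp add: vec_eq_iff)
  qed
  then have "z \<bullet> (X *v z) = z \<bullet> (transpose (Ea a) *v (Y *v (Ea a *v z)))"
    by (simp add: matrix_vector_mul_assoc)
  also have "\<dots> = (Ea a *v z) \<bullet> (Y *v (Ea a *v z))"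
    using inner_transpose[of z "transpose (Ea a)"] by simp
  finally show ?thesis .
qed

lemma linear_vecM: "linear vecM"
  by (rule linearI) (simp_all add: vecM_def vec_eq_iff)




lemma aux_sum: "(\<Sum>j\<in>A. (a j - b j * c) * d * e j) = d * (\<Sum>j\<in>A. a j * e j) - d * c * (\<Sum>j\<in>A. b j * e j :: real)"
  by (simp add: sum_distrib_left sum_subtractf[symmetric] algebra_simps)

theorem theorem3:
  fixes X :: "((real, 'n::{finite,wellorder}) vec, 'n) vec"
    and Y :: "((real, 'n \<times> 'n) vec, 'n \<times> 'n) vec"
  assumes "X \<in> elliptope4"
    and "pseudomoment4 Y"
    and "extends4 Y X"
  shows "psd (Y - outer (vecM X) (vecM X)) \<and>
    (\<forall>v (\<mu>::real). v \<noteq> 0 \<and> \<mu> \<noteq> 0 \<and> (Y - outer (vecM X) (vecM X)) *v v = \<mu> *\<^sub>R v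
           \<longrightarrow> v \<in> vecM ` pert elliptope2 X) \<and>
    rank Y \<le> dim (pert elliptope2 X) + 1 \<and>
    real (dim (pert elliptope2 X)) + 1
           = real (rank X) * (real (rank X) + 1) / 2 - real (rank (hsq X)) + 1 \<and>
    real (rank X) * (real (rank X) + 1) / 2 - real (rank (hsq X)) + 1
           \<le> real (rank X) * (real (rank X) + 1) / 2 \<and>
    (X extreme_point_of elliptope2 \<longrightarrow>
           rank Y = 1 \<and> rank X = 1 \<and>
           (\<exists>x :: (real, 'n) vec. (\<forall>i. x $ i = 1 \<or> x $ i = -1) \<and>
              X = outer x x \<and> Y = outer (kron x) (kron x)))"
proof -
  have pm: "pseudomoment4 Y" by (rule assms(2))
  have sX: "symm X" using assms(1) by (simp add: elliptope4_def)
  have sXe: "X $ j $ i = X $ i $ j" for i j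
  proof -
    have t: "transpose X = X" using sX by (simp add: symm_def)
    have "X$i$j = (transpose X)$j$i" by (simp add: Finite_Cartesian_Product.transpose_def)
    then show ?thesis using t by simp
  qed
  define l0 :: 'n where "l0 = (LEAST k. True)"
  have ext: "Y $ (l0, i) $ (l0, j) = X $ i $ j" for i j
    using assms(3) unfolding extends4_def l0_def by blast
  have pY: "psd Y" using pm_psd[OF pm] .
  have YX: "Y $ (i,j) $ (k,k) = X $ i $ j" for i j k
  proof -
    have "Y $ (i,j) $ (k,k) = Y $ (i,j) $ (l0,l0)" by (rule pm_C2[OF pm])
    also have "\<dots> = Y $ (i,l0) $ (j,l0)" by (rule pm_S12[OF pm, symmetric])
    also have "\<dots> = Y $ (l0,i) $ (j,l0)" by (rule pm_S01[OF pm, symmetric])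
    also have "\<dots> = Y $ (l0,i) $ (l0,j)" by (rule pm_S23[OF pm])
    also have "\<dots> = X $ i $ j" by (rule ext)
    finally show ?thesis .
  qed
  have Ypair: "Y $ (a,j) $ (a,j') = X $ j $ j'" for a j j'
  proof -
    have "Y $ (a,j) $ (a,j') = Y $ (a,a) $ (j,j')" by (rule pm_S12[OF pm])
    also have "\<dots> = Y $ (j,j') $ (a,a)" by (rule pm_sym[OF pm])
    also have "\<dots> = X $ j $ j'" by (rule YX)
    finally show ?thesis .
  qed
  have Xd: "X$i$i = 1" for i
  proof -
    have "X$i$i = Y $ (i,i) $ (l0,l0)" by (rule YX[symmetric])
    also have "\<dots> = Y $ (l0,l0) $ (i,i)" by (rule pm_sym[OF pm])
    also have "\<dots> = Y $ (l0,l0) $ (l0,l0)" by (rule pm_C2[OF pm])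
    also have "\<dots> = 1" by (rule pm_C3[OF pm])
    finally show ?thesis .
  qed
  have Xd': "\<forall>i. X$i$i = 1" using Xd by blast
  have pX: "psd X"
  proof -
    have "0 \<le> z \<bullet> (X *v z)" for z
      using EYE[of Y l0 X z] Ypair pY unfolding psd_def by simp
    then show ?thesis using sX by (simp add: psd_def)
  qed
  define vX where "vX = vecM X"
  define e0 where "e0 = (axis (l0,l0) 1 :: real^('n \<times> 'n))"
  have vXe: "Y *v e0 = vX"
  proof -
    have "(Y *v e0) $ p = vX $ p" for p
      by (cases p) (simp add: e0_def mv_column vX_def vecM_def YX)
    then show ?thesis by (simp add: vec_eq_iff)
  qed
  have e01: "e0 \<bullet> (Y *v e0) = 1" unfolding e0_def axis_inner_mv by (rule pm_C3[OF pm])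
  define M where "M = Y - outer vX vX"
  have pM: "psd M" using schur_psd[OF pY e01] vXe M_def by simp
  obtain S :: "'n set" and w where fa: "X = (\<Sum>i\<in>S. outer (w i) (w i))" "card S = rank X" "inj_on w S"
    "independent (w ` S)" using psd_factor[OF pX] by blast
  interpret fac X S w using fa by unfold_locales auto
  have subP: "subspace (pert elliptope2 X)" by (rule subspace_pert[OF pX Xd'])
  have colM: "M *v x \<in> vecM ` pert elliptope2 X" for x
  proof -
    define A where "A = (\<chi> i j. (M *v x) $ (i,j))"
    have vA: "vecM A = M *v x" by (simp add: A_def vecM_def vec_eq_iff)
    have Ment: "M $ p $ q = Y $ p $ q - vX $ p * vX $ q" for p q by (simp add: M_def outer_def)
    have Aent: "A $ i $ j = (\<Sum>q\<in>UNIV. (Y $ (i,j) $ q - X $ i $ j * vX $ q) * x $ q)" for i j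
      by (simp add: A_def matrix_vector_mult_def Ment vX_def vecM_def)
    have symA: "symm A"
    proof -
      have "A $ j $ i = A $ i $ j" for i j
      proof -
        have "Y $ (j,i) $ q = Y $ (i,j) $ q" for q by (cases q) (simp add: pm_S01[OF pm])
        then show ?thesis by (simp add: Aent sXe)
      qed
      then show ?thesis by (simp add: symm_def transpose_def vec_eq_iff)
    qed
    have dA: "\<forall>i. A$i$i = 0"
    proof
      fix i
      have "Y $ (i,i) $ q = vX $ q" for q
      proof (cases q)
        case (Pair k l)
        have "Y $ (i,i) $ (k,l) = Y $ (k,l) $ (i,i)" by (rule pm_sym[OF pm])
        also have "\<dots> = X $ k $ l" by (rule YX)
        finally show ?thesis using Pair by (simp add: vX_def vecM_def)
      qed
      then show "A$i$i = 0" by (simp add: Aent Xd)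
    qed
    have kA: "\<forall>z. X *v z = 0 \<longrightarrow> A *v z = 0"
    proof (intro allI impI)
      fix z assume z: "X *v z = 0"
      have Yz: "Y *v (Ea i *v z) = 0" for i
      proof -
        have "z \<bullet> (X *v z) = (Ea i *v z) \<bullet> (Y *v (Ea i *v z))" by (rule EYE) (rule Ypair)
        then have "(Ea i *v z) \<bullet> (Y *v (Ea i *v z)) = 0" using z by simp
        then show ?thesis by (rule psd_zero[OF pY])
      qed
      have s1: "(\<Sum>j\<in>UNIV. Y $ (i,j) $ q * z $ j) = 0" for i q
      proof -
        have "(\<Sum>j\<in>UNIV. Y $ (i,j) $ q * z $ j) = (Y *v (Ea i *v z)) $ q"
          unfolding Ea_mv by (intro sum.cong refl) (metis pm_sym[OF pm])
        then show ?thesis using Yz by simp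
      qed
      have s2: "(\<Sum>j\<in>UNIV. X $ i $ j * z $ j) = 0" for i
      proof -
        have "(X *v z) $ i = 0" using z by simp
        then show ?thesis by (simp add: matrix_vector_mult_def)
      qed
      have "(A *v z) $ i = 0" for i
      proof -
        have "(A *v z) $ i = (\<Sum>j\<in>UNIV. \<Sum>q\<in>UNIV. (Y$(i,j)$q - X$i$j * vX$q) * x$q * z$j)"
          by (simp add: matrix_vector_mult_def Aent sum_distrib_right)
        also have "\<dots> = (\<Sum>q\<in>UNIV. \<Sum>j\<in>UNIV. (Y$(i,j)$q - X$i$j * vX$q) * x$q * z$j)"
          by (rule sum.swap)
        also have "\<dots> = (\<Sum>q\<in>UNIV. x$q * (\<Sum>j\<in>UNIV. Y$(i,j)$q * z$j) - x$q * vX$q * (\<Sum>j\<in>UNIV. X$i$j * z$j))"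
          by (intro sum.cong refl) (simp add: aux_sum)
        also have "\<dots> = 0" by (simp add: s1 s2)
        finally show ?thesis .
      qed
      then show "A *v z = 0" by (simp add: vec_eq_iff)
    qed
    obtain B where "B \<in> SymS S" "dg (Phi S w B) = 0" "A = Phi S w B"
      using T_sub_Phi[OF symA dA kA] by blast
    then have "A \<in> pert elliptope2 X" using Phi_in_pert[OF Xd'] by simp
    then show ?thesis using vA by (metis image_eqI)
  qed
  have eig: "\<forall>v (\<mu>::real). v \<noteq> 0 \<and> \<mu> \<noteq> 0 \<and> M *v v = \<mu> *\<^sub>R v \<longrightarrow> v \<in> vecM ` pert elliptope2 X"
  proof (intro allI impI)
    fix v and \<mu> :: real assume h: "v \<noteq> 0 \<and> \<mu> \<noteq> 0 \<and> M *v v = \<mu> *\<^sub>R v"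
    have "M *v ((1/\<mu>) *\<^sub>R v) = v" using h by (simp add: mv_scale)
    then show "v \<in> vecM ` pert elliptope2 X" using colM by metis
  qed
  have rY: "rank Y \<le> dim (pert elliptope2 X) + 1"
  proof -
    let ?P = "vecM ` pert elliptope2 X"
    have "range (\<lambda>x. Y *v x) \<subseteq> span (insert vX ?P)"
    proof clarify
      fix x
      have "Y *v x = M *v x + (vX \<bullet> x) *\<^sub>R vX" by (simp add: M_def matrix_vector_mult_diff_rdistrib outer_mv)
      moreover have "M *v x \<in> span (insert vX ?P)" using colM by (meson span_base insertI2)
      moreover have "(vX \<bullet> x) *\<^sub>R vX \<in> span (insert vX ?P)" by (intro span_mul span_base) simp
      ultimately show "Y *v x \<in> span (insert vX ?P)" by (simp add: span_add)
    qed
    then have "rank Y \<le> dim (span (insert vX ?P))" unfolding rank_dim_range by (rule dim_subset)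
    also have "\<dots> = dim (insert vX ?P)" by simp
    also have "\<dots> \<le> dim ?P + 1" by (simp add: dim_insert)
    finally have a: "rank Y \<le> dim ?P + 1" .
    have "dim ?P \<le> dim (pert elliptope2 X)" by (rule dim_image_le[OF linear_vecM])
    then show ?thesis using a by linarith
  qed
  have dp: "dim (pert elliptope2 X) + rank (hsq X) = rank X * (rank X + 1) div 2"
    using dim_pert[OF pX Xd'] fa(2) by simp
  have ev: "even (rank X * (rank X + 1))" by simp
  have rdiv: "real (rank X * (rank X + 1) div 2) = real (rank X) * (real (rank X) + 1) / 2"
    using ev by (simp add: real_of_nat_div algebra_simps)
  have deq: "real (dim (pert elliptope2 X)) + 1 = real (rank X) * (real (rank X) + 1) / 2 - real (rank (hsq X)) + 1"
  proof -
    have "real (dim (pert elliptope2 X)) + real (rank (hsq X)) = real (rank X * (rank X + 1) div 2)"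
      using dp by (metis of_nat_add)
    then show ?thesis using rdiv by linarith
  qed
  have h1: "rank (hsq X) \<ge> 1"
  proof -
    have "hsq X $ l0 $ l0 = 1" by (simp add: hsq_def Xd)
    then have "hsq X \<noteq> 0" by auto
    then have "rank (hsq X) \<noteq> 0" by (simp add: rank_eq_0)
    then show ?thesis by simp
  qed
  have ineq: "real (rank X) * (real (rank X) + 1) / 2 - real (rank (hsq X)) + 1 \<le> real (rank X) * (real (rank X) + 1) / 2"
    using h1 by simp
  have extr: "X extreme_point_of elliptope2 \<longrightarrow> rank Y = 1 \<and> rank X = 1 \<and>
           (\<exists>x :: (real, 'n) vec. (\<forall>i. x $ i = 1 \<or> x $ i = -1) \<and> X = outer x x \<and> Y = outer (kron x) (kron x))"
  proof
    assume exX: "X extreme_point_of elliptope2"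
    have p0: "pert elliptope2 X \<subseteq> {0}"
    proof
      fix A assume A: "A \<in> pert elliptope2 X"
      show "A \<in> {0}"
      proof (rule ccontr)
        assume "A \<notin> {0}"
        then have A0: "A \<noteq> 0" by simp
        obtain e where e: "e > 0" "\<forall>t. 0 < t \<and> t < e \<longrightarrow> X + t *\<^sub>R A \<in> elliptope2 \<and> X - t *\<^sub>R A \<in> elliptope2"
          using A unfolding pert_def by blast
        define t where "t = e / 2"
        have t: "0 < t" "t < e" using e(1) by (auto simp: t_def)
        have ab: "X - t *\<^sub>R A \<in> elliptope2" "X + t *\<^sub>R A \<in> elliptope2" using e(2) t by blast+
        have mid: "X = midpoint (X - t *\<^sub>R A) (X + t *\<^sub>R A)"
          by (simp add: midpoint_def scaleR_add_right[symmetric])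
        have ne: "X - t *\<^sub>R A \<noteq> X + t *\<^sub>R A"
        proof
          assume eq: "X - t *\<^sub>R A = X + t *\<^sub>R A"
          have "A $ i $ j = 0" for i j
          proof -
            have c: "(X - t *\<^sub>R A) $ i $ j = X$i$j - t * A$i$j" by simp
            have d: "(X + t *\<^sub>R A) $ i $ j = X$i$j + t * A$i$j" by simp
            have "X$i$j - t * A$i$j = X$i$j + t * A$i$j" by (metis c d eq)
            then have "t * A$i$j = 0" by linarith
            then show ?thesis using t(1) by simp
          qed
          then have "A = 0" by (simp add: vec_eq_iff)
          then show False using A0 by simp
        qed
        have "X \<in> open_segment (X - t *\<^sub>R A) (X + t *\<^sub>R A)"
          using ne by (subst mid) simp
        then show False using exX ab unfolding extreme_point_of_def by blast
      qed
    qed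
    have M0: "M = 0"
    proof -
      have "M *v x = 0" for x
      proof -
        have "M *v x \<in> vecM ` pert elliptope2 X" by (rule colM)
        then obtain A where "A \<in> pert elliptope2 X" "M *v x = vecM A" by blast
        then have "A = 0" using p0 by blast
        then show ?thesis using \<open>M *v x = vecM A\<close> by (simp add: vecM_def vec_eq_iff)
      qed
      then have "M $ p $ q = 0" for p q by (metis mv_column zero_index)
      then show ?thesis by (simp add: vec_eq_iff)
    qed
    have Yo: "Y = outer vX vX" using M0 by (simp add: M_def)
    have Yent: "Y $ p $ q = vX $ p * vX $ q" for p q using Yo by (simp add: outer_def)
    have dp0: "dim (pert elliptope2 X) = 0" using p0 by simp
    have "Y $ (l0,l0) $ (l0,l0) = 1" by (rule pm_C3[OF pm])
    then have "Y \<noteq> 0" by auto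
    then have "rank Y \<noteq> 0" by (simp add: rank_eq_0)
    then have rY1: "rank Y = 1" using rY dp0 by simp
    have Xsq: "(X $ i $ j)^2 = 1" for i j
    proof -
      have "Y $ (i,j) $ (i,j) = Y $ (i,i) $ (j,j)" by (rule pm_S12[OF pm])
      also have "\<dots> = 1" using YX Xd by simp
      finally have "Y $ (i,j) $ (i,j) = 1" .
      then show ?thesis using Yent[of "(i,j)" "(i,j)"] by (simp add: vX_def vecM_def power2_eq_square)
    qed
    define x where "x = (\<chi> i. X $ l0 $ i)"
    have xpm: "\<forall>i. x $ i = 1 \<or> x $ i = -1" using Xsq by (simp add: x_def power2_eq_1_iff)
    have Xo: "X = outer x x"
    proof -
      have "X $ i $ j = x $ i * x $ j" for i j
      proof -
        have "X $ i $ j = Y $ (l0,i) $ (l0,j)" by (rule ext[symmetric])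
        then show ?thesis by (simp add: Yent vX_def vecM_def x_def)
      qed
      then show ?thesis by (simp add: outer_def vec_eq_iff)
    qed
    have vk: "vX = kron x" by (simp add: vX_def vecM_def kron_def vec_eq_iff Xo outer_def)
    have rX1: "rank X = 1"
    proof -
      have "range (\<lambda>z. X *v z) \<subseteq> span {x}"
      proof clarify
        fix z show "X *v z \<in> span {x}" unfolding Xo outer_mv by (intro span_mul span_base) simp
      qed
      then have "rank X \<le> dim (span {x})" unfolding rank_dim_range by (rule dim_subset)
      also have "\<dots> \<le> 1" using dim_le_card'[of "{x}"] by simp
      finally have "rank X \<le> 1" .
      moreover have "X \<noteq> 0" using Xd[of l0] by auto
      then have "rank X \<noteq> 0" by (simp add: rank_eq_0)
      ultimately show ?thesis by simp
    qed
    show "rank Y = 1 \<and> rank X = 1 \<and>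
           (\<exists>x :: (real, 'n) vec. (\<forall>i. x $ i = 1 \<or> x $ i = -1) \<and> X = outer x x \<and> Y = outer (kron x) (kron x))"
      using rY1 rX1 xpm Xo Yo vk by blast
  qed
  have Meq: "Y - outer (vecM X) (vecM X) = M" by (simp add: M_def vX_def)
  show ?thesis unfolding Meq
    using pM eig rY deq ineq extr by blast
qed


end
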